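(* Let $n\geq 3$ and let $C_n^*$ be the bigraded complex described in the context. Let $\phi\colon C_n^*\to C_n^*$ be an $R$-linear chain map that is homogeneous of bigrading $(c_1,c_2)$, where $c_1>-2n$ and $c_2>-2n$. Then $\phi(\alpha_n^* )$ is either $0$ or of the form $c\,\alpha_n^*$ for some $c\in\mathbb{F}[\mathcal{U},\mathcal{V}]$.
   Context: Let $\mathbb{F}=\mathbb{Z}/2$ and $R=\mathbb{F}[\mathcal{U},\mathcal{V}]$, bigraded by $(\operatorname{gr}_{\mathcal{U}},\operatorname{gr}_{\mathcal{V}})$ with $\mathcal{U}$ of bigrading $(-2,0)$ and $\mathcal{V}$ of bigrading $(0,-2)$. For $n\geq 3$, $C_n^*$ is the free $R$-module with basis $\alpha^*_s$ ($1\leq s\leq 2n-1$); $\widetilde{\alpha}^*_s$ ($1\leq s\leq n-2$ and $n+1\leq s\leq 2n-2$); $b^{*,(s)}_{n-1}$ ($1\leq s\leq n-2$); $b^{*,(s)}_{n}$ ($1\leq s\leq 2n-2$); $b^{*,(s)}_{n+1}$ ($n+1\leq s\leq 2n-2$), with $R$-linear differential $\partial$ given by $\partial\alpha^*_s=0$, $\partial\widetilde{\alpha}^*_s=0$, and $\partial b^{*,(s)}_{n-1}=\mathcal{U}^{n(n-1)/2}\mathcal{V}^{n(n-1)/2}\alpha^*_s+\mathcal{V}^{n-s-1}\widetilde{\alpha}^*_s$ for $1\leq s\leq n-2$; $\partial b^{*,(s)}_{n}=\mathcal{U}^{n(n+1)/2-s}\mathcal{V}^{n(n+1)/2}\alpha^*_{s+1}+\mathcal{U}^{n}\widetilde{\alpha}^*_s$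 for $1\leq s\leq n-2$; $\partial b^{*,(s)}_{n}=\mathcal{U}^{n(n+1)/2}\mathcal{V}^{n(n-1)/2-n+s+1}\alpha^*_s+\mathcal{U}^{n(n+1)/2-s}\mathcal{V}^{n(n+1)/2}\alpha^*_{s+1}$ for $n-1\leq s\leq n$; $\partial b^{*,(s)}_{n}=\mathcal{U}^{n(n+1)/2}\mathcal{V}^{n(n-1)/2-n+s+1}\alpha^*_s+\mathcal{V}^{n}\widetilde{\alpha}^*_s$ for $n+1\leq s\leq 2n-2$; $\partial b^{*,(s)}_{n+1}=\mathcal{U}^{n(n-1)/2}\mathcal{V}^{n(n-1)/2}\alpha^*_{s+1}+\mathcal{U}^{s-n}\widetilde{\alpha}^*_s$ for $n+1\leq s\leq 2n-2$. The basis elements are assigned bigradings so that $\partial$ is homogeneous of bigrading $(-1,-1)$ (unique up to an overall shift; any such choice is fixed). A map is homogeneous of bigrading $(c_1,c_2)$ if it sends homogeneous elements of bigrading $(a,b)$ to homogeneous elements of bigrading $(a+c_1,b+c_2)$. *)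

theory Defs
  imports "HOL-Library.Z2" "HOL-Computational_Algebra.Polynomial"
begin

text \<open>The ground ring R = F[U,V] with F = Z/2 (type bit), realised as
  polynomials in V whose coefficients are polynomials in U.
  The monomial U^a V^b is stored as coefficient 1 at V-degree b, U-degree a.\<close>

type_synonym ring = "bit poly poly"

definition monoUV :: "nat \<Rightarrow> nat \<Rightarrow> ring" where
  "monoUV a b = monom (monom 1 a) b"

text \<open>Generator labels: Al s = alpha*_s, At s = tilde alpha*_s,
  B k s = b*^{(s)}_k (k is the actual subscript n-1, n or n+1).\<close>

datatype gen = Al nat | At nat | B nat nat

definition basis :: "nat \<Rightarrow> gen set" where
  "basis n =
     {Al s | s. 1 \<le> s \<and> s \<le> 2*n - 1}
   \<union> {At s | s. (1 \<le> s \<and> s \<le> n - 2) \<or> (n + 1 \<le> s \<and> s \<le> 2*n - 2)}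
   \<union> {B (n - 1) s | s. 1 \<le> s \<and> s \<le> n - 2}
   \<union> {B n s | s. 1 \<le> s \<and> s \<le> 2*n - 2}
   \<union> {B (n + 1) s | s. n + 1 \<le> s \<and> s \<le> 2*n - 2}"

type_synonym elt = "gen \<Rightarrow> ring"

definition carrier :: "nat \<Rightarrow> elt set" where
  "carrier n = {x. \<forall>g. g \<notin> basis n \<longrightarrow> x g = 0}"

definition bvec :: "gen \<Rightarrow> elt" where
  "bvec g = (\<lambda>h. if h = g then 1 else 0)"

definition scal :: "ring \<Rightarrow> elt \<Rightarrow> elt" where
  "scal r x = (\<lambda>h. r * x h)"

text \<open>Two-term element  p * e_g + q * e_h  (g \<noteq> h in all uses).\<close>

definition two :: "ring \<Rightarrow> gen \<Rightarrow> ring \<Rightarrow> gen \<Rightarrow> elt" where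
  "two p g q h = (\<lambda>k. (if k = g then p else 0) + (if k = h then q else 0))"

definition dgen :: "nat \<Rightarrow> gen \<Rightarrow> elt" where
  "dgen n g = (case g of
      Al s \<Rightarrow> (\<lambda>_. 0)
    | At s \<Rightarrow> (\<lambda>_. 0)
    | B k s \<Rightarrow>
        (if k = n - 1 \<and> 1 \<le> s \<and> s \<le> n - 2 then
           two (monoUV (n*(n-1) div 2) (n*(n-1) div 2)) (Al s) (monoUV 0 (n - s - 1)) (At s)
         else if k = n \<and> 1 \<le> s \<and> s \<le> n - 2 then
           two (monoUV (n*(n+1) div 2 - s) (n*(n+1) div 2)) (Al (s+1)) (monoUV n 0) (At s)
         else if k = n \<and> n - 1 \<le> s \<and> s \<le> n then
           two (monoUV (n*(n+1) div 2) (n*(n-1) div 2 + s + 1 - n)) (Al s)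
               (monoUV (n*(n+1) div 2 - s) (n*(n+1) div 2)) (Al (s+1))
         else if k = n \<and> n + 1 \<le> s \<and> s \<le> 2*n - 2 then
           two (monoUV (n*(n+1) div 2) (n*(n-1) div 2 + s + 1 - n)) (Al s) (monoUV 0 n) (At s)
         else if k = n + 1 \<and> n + 1 \<le> s \<and> s \<le> 2*n - 2 then
           two (monoUV (n*(n-1) div 2) (n*(n-1) div 2)) (Al (s+1)) (monoUV (s - n) 0) (At s)
         else (\<lambda>_. 0)))"

definition dd :: "nat \<Rightarrow> elt \<Rightarrow> elt" where
  "dd n x = (\<lambda>h. \<Sum>g\<in>basis n. x g * dgen n g h)"

text \<open>x is homogeneous of bigrading d (w.r.t. generator bigradings gr):
  every monomial U^a V^b occurring in the coefficient of a generator h has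
  bigrading gr h + (-2a,-2b) = d.  (0 is homogeneous of every bigrading.)\<close>

definition homog :: "(gen \<Rightarrow> int \<times> int) \<Rightarrow> int \<times> int \<Rightarrow> elt \<Rightarrow> bool" where
  "homog gr d x \<longleftrightarrow>
     (\<forall>h a b. coeff (coeff (x h) b) a \<noteq> 0 \<longrightarrow>
        (fst (gr h) - 2 * int a, snd (gr h) - 2 * int b) = d)"

definition admissible_grading :: "nat \<Rightarrow> (gen \<Rightarrow> int \<times> int) \<Rightarrow> bool" where
  "admissible_grading n gr \<longleftrightarrow>
     (\<forall>g\<in>basis n. homog gr (fst (gr g) - 1, snd (gr g) - 1) (dgen n g))"

definition R_linear :: "nat \<Rightarrow> (elt \<Rightarrow> elt) \<Rightarrow> bool" where
  "R_linear n \<phi> \<longleftrightarrow>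
     (\<forall>x\<in>carrier n. \<phi> x \<in> carrier n)
   \<and> (\<forall>x\<in>carrier n. \<forall>y\<in>carrier n. \<phi> (\<lambda>h. x h + y h) = (\<lambda>h. \<phi> x h + \<phi> y h))
   \<and> (\<forall>r. \<forall>x\<in>carrier n. \<phi> (scal r x) = scal r (\<phi> x))"

definition chain_map :: "nat \<Rightarrow> (elt \<Rightarrow> elt) \<Rightarrow> bool" where
  "chain_map n \<phi> \<longleftrightarrow> (\<forall>x\<in>carrier n. \<phi> (dd n x) = dd n (\<phi> x))"

definition homogeneous_map :: "(gen \<Rightarrow> int \<times> int) \<Rightarrow> nat \<Rightarrow> int \<times> int \<Rightarrow> (elt \<Rightarrow> elt) \<Rightarrow> bool" where
  "homogeneous_map gr n c \<phi> \<longleftrightarrow>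
     (\<forall>x\<in>carrier n. \<forall>d. homog gr d x \<longrightarrow> homog gr (fst d + fst c, snd d + snd c) (\<phi> x))"

end

theory Submission
  imports Defs
begin

lemma coeff_monoUV: "coeff (coeff (monoUV a b) b') a' = (if a' = a \<and> b' = b then 1 else 0)"
  by (simp add: monoUV_def coeff_monom)

lemma homog_two:
  assumes "homog gr d (two (monoUV a b) g (monoUV a' b') h)" "g \<noteq> h"
  shows "fst (gr g) - 2*int a = fst d \<and> snd (gr g) - 2*int b = snd d"
    and "fst (gr h) - 2*int a' = fst d \<and> snd (gr h) - 2 * int b' = snd d"
proof -
  have "coeff (coeff (two (monoUV a b) g (monoUV a' b') h g) b) a \<noteq> 0"
    using assms(2) by (simp add: two_def coeff_monoUV)
  from assms(1)[unfolded homog_def, rule_format, OF this]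
  show "fst (gr g) - 2*int a = fst d \<and> snd (gr g) - 2*int b = snd d" by auto
next
  have "coeff (coeff (two (monoUV a b) g (monoUV a' b') h h) b') a' \<noteq> 0"
    using assms(2) by (simp add: two_def coeff_monoUV)
  from assms(1)[unfolded homog_def, rule_format, OF this]
  show "fst (gr h) - 2*int a' = fst d \<and> snd (gr h) - 2 * int b' = snd d" by auto
qed

lemma PM: "(n::nat)*(n+1) div 2 = n*(n-1) div 2 + n"
proof (cases n)
  case (Suc m)
  have "n*(n+1) = n*(n-1) + 2*n" using Suc by (simp add: algebra_simps)
  then show ?thesis by simp
qed simp

lemma P_ge: "(n::nat) \<ge> 3 \<Longrightarrow> n*(n+1) div 2 \<ge> n + 1"
proof -
  assume "n \<ge> 3"
  then have "n*(n+1) \<ge> 2*(n+1)" using mult_le_mono1[of 2 n "n+1"] by simp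
  then have "(2*(n+1)) div 2 \<le> n*(n+1) div 2" using div_le_mono by blast
  then show ?thesis by simp
qed

context
  fixes n :: nat and gr :: "gen \<Rightarrow> int \<times> int"
  assumes n3: "n \<ge> 3" and adm: "admissible_grading n gr"
begin

lemma ne: "n - 1 \<noteq> n" "n \<noteq> n - 1" "n + 1 \<noteq> n - 1" "n + 1 \<noteq> n" "Suc n \<noteq> n - Suc 0" "n \<noteq> n - Suc 0"
  using n3 by auto

lemma hB: "B k s \<in> basis n \<Longrightarrow> homog gr (fst (gr (B k s)) - 1, snd (gr (B k s)) - 1) (dgen n (B k s))"
  using adm unfolding admissible_grading_def by blast

lemma R1:
  assumes "1 \<le> s" "s \<le> n - 2"
  shows "fst (gr (Al s)) - 2*int (n*(n-1) div 2) = fst (gr (B (n-1) s)) - 1 \<and>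
         snd (gr (Al s)) - 2*int (n*(n-1) div 2) = snd (gr (B (n-1) s)) - 1"
    and "fst (gr (At s)) = fst (gr (B (n-1) s)) - 1 \<and>
         snd (gr (At s)) - 2*int (n - s - 1) = snd (gr (B (n-1) s)) - 1"
proof -
  have b: "B (n-1) s \<in> basis n" using assms unfolding basis_def by blast
  have d: "dgen n (B (n-1) s) = two (monoUV (n*(n-1) div 2) (n*(n-1) div 2)) (Al s) (monoUV 0 (n - s - 1)) (At s)"
    using assms n3 by (simp add: dgen_def ne)
  note h = hB[OF b, unfolded d]
  show "fst (gr (Al s)) - 2*int (n*(n-1) div 2) = fst (gr (B (n-1) s)) - 1 \<and>
         snd (gr (Al s)) - 2*int (n*(n-1) div 2) = snd (gr (B (n-1) s)) - 1"
    using homog_two(1)[OF h] by simp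
  show "fst (gr (At s)) = fst (gr (B (n-1) s)) - 1 \<and>
         snd (gr (At s)) - 2*int (n - s - 1) = snd (gr (B (n-1) s)) - 1"
    using homog_two(2)[OF h] by simp
qed

lemma R2:
  assumes "1 \<le> s" "s \<le> n - 2"
  shows "fst (gr (Al (s+1))) - 2*int (n*(n+1) div 2 - s) = fst (gr (B n s)) - 1 \<and>
         snd (gr (Al (s+1))) - 2*int (n*(n+1) div 2) = snd (gr (B n s)) - 1"
    and "fst (gr (At s)) - 2 * int n = fst (gr (B n s)) - 1 \<and>
         snd (gr (At s)) = snd (gr (B n s)) - 1"
proof -
  have b: "B n s \<in> basis n" using assms unfolding basis_def by auto
  have d: "dgen n (B n s) = two (monoUV (n*(n+1) div 2 - s) (n*(n+1) div 2)) (Al (s+1)) (monoUV n 0) (At s)"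
    using assms n3 by (simp add: dgen_def ne)
  note h = hB[OF b, unfolded d]
  show "fst (gr (Al (s+1))) - 2*int (n*(n+1) div 2 - s) = fst (gr (B n s)) - 1 \<and>
         snd (gr (Al (s+1))) - 2*int (n*(n+1) div 2) = snd (gr (B n s)) - 1"
    using homog_two(1)[OF h] by simp
  show "fst (gr (At s)) - 2 * int n = fst (gr (B n s)) - 1 \<and>
         snd (gr (At s)) = snd (gr (B n s)) - 1"
    using homog_two(2)[OF h] by simp
qed

lemma R3:
  assumes "n - 1 \<le> s" "s \<le> n"
  shows "fst (gr (Al s)) - 2*int (n*(n+1) div 2) = fst (gr (B n s)) - 1 \<and>
         snd (gr (Al s)) - 2*int (n*(n-1) div 2 + s + 1 - n) = snd (gr (B n s)) - 1"
    and "fst (gr (Al (s+1))) - 2*int (n*(n+1) div 2 - s) = fst (gr (B n s)) - 1 \<and>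
         snd (gr (Al (s+1))) - 2*int (n*(n+1) div 2) = snd (gr (B n s)) - 1"
proof -
  have b: "B n s \<in> basis n" using assms n3 unfolding basis_def by auto
  have nle: "\<not> s \<le> n - 2" "\<not> s \<le> n - Suc (Suc 0)" using assms n3 by auto
  have d: "dgen n (B n s) = two (monoUV (n*(n+1) div 2) (n*(n-1) div 2 + s + 1 - n)) (Al s)
               (monoUV (n*(n+1) div 2 - s) (n*(n+1) div 2)) (Al (s+1))"
    using assms n3 by (simp add: dgen_def ne nle)
  note h = hB[OF b, unfolded d]
  show "fst (gr (Al s)) - 2*int (n*(n+1) div 2) = fst (gr (B n s)) - 1 \<and>
         snd (gr (Al s)) - 2*int (n*(n-1) div 2 + s + 1 - n) = snd (gr (B n s)) - 1"
    using homog_two(1)[OF h] by simp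
  show "fst (gr (Al (s+1))) - 2*int (n*(n+1) div 2 - s) = fst (gr (B n s)) - 1 \<and>
         snd (gr (Al (s+1))) - 2*int (n*(n+1) div 2) = snd (gr (B n s)) - 1"
    using homog_two(2)[OF h] by simp
qed

lemma R4:
  assumes "n + 1 \<le> s" "s \<le> 2*n - 2"
  shows "fst (gr (Al s)) - 2*int (n*(n+1) div 2) = fst (gr (B n s)) - 1 \<and>
         snd (gr (Al s)) - 2*int (n*(n-1) div 2 + s + 1 - n) = snd (gr (B n s)) - 1"
    and "fst (gr (At s)) = fst (gr (B n s)) - 1 \<and>
         snd (gr (At s)) - 2*int n = snd (gr (B n s)) - 1"
proof -
  have b: "B n s \<in> basis n" using assms n3 unfolding basis_def by auto
  have nle: "\<not> s \<le> n - 2" "\<not> s \<le> n - Suc (Suc 0)" using assms n3 by auto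
  have d: "dgen n (B n s) = two (monoUV (n*(n+1) div 2) (n*(n-1) div 2 + s + 1 - n)) (Al s) (monoUV 0 n) (At s)"
    using assms n3 by (simp add: dgen_def ne nle)
  note h = hB[OF b, unfolded d]
  show "fst (gr (Al s)) - 2*int (n*(n+1) div 2) = fst (gr (B n s)) - 1 \<and>
         snd (gr (Al s)) - 2*int (n*(n-1) div 2 + s + 1 - n) = snd (gr (B n s)) - 1"
    using homog_two(1)[OF h] by simp
  show "fst (gr (At s)) = fst (gr (B n s)) - 1 \<and>
         snd (gr (At s)) - 2*int n = snd (gr (B n s)) - 1"
    using homog_two(2)[OF h] by simp
qed

lemma R5:
  assumes "n + 1 \<le> s" "s \<le> 2*n - 2"
  shows "fst (gr (Al (s+1))) - 2*int (n*(n-1) div 2) = fst (gr (B (n+1) s)) - 1 \<and>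
         snd (gr (Al (s+1))) - 2*int (n*(n-1) div 2) = snd (gr (B (n+1) s)) - 1"
    and "fst (gr (At s)) - 2*int (s - n) = fst (gr (B (n+1) s)) - 1 \<and>
         snd (gr (At s)) = snd (gr (B (n+1) s)) - 1"
proof -
  have b: "B (n+1) s \<in> basis n" using assms n3 unfolding basis_def by auto
  have nle: "\<not> s \<le> n - 2" "\<not> s \<le> n - Suc (Suc 0)" using assms n3 by auto
  have d: "dgen n (B (n+1) s) = two (monoUV (n*(n-1) div 2) (n*(n-1) div 2)) (Al (s+1)) (monoUV (s - n) 0) (At s)"
    using assms n3 by (simp add: dgen_def ne nle)
  note h = hB[OF b, unfolded d]
  show "fst (gr (Al (s+1))) - 2*int (n*(n-1) div 2) = fst (gr (B (n+1) s)) - 1 \<and>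
         snd (gr (Al (s+1))) - 2*int (n*(n-1) div 2) = snd (gr (B (n+1) s)) - 1"
    using homog_two(1)[OF h] by simp
  show "fst (gr (At s)) - 2*int (s - n) = fst (gr (B (n+1) s)) - 1 \<and>
         snd (gr (At s)) = snd (gr (B (n+1) s)) - 1"
    using homog_two(2)[OF h] by simp
qed

lemma PMi: "int (n*(n+1) div 2) = int (n*(n-1) div 2) + int n"
  using PM[of n] by simp

lemma Pge: "int (n*(n+1) div 2) \<ge> int n + 1"
  using P_ge[OF n3] by simp

lemma low_step:
  assumes "1 \<le> s" "s \<le> n - 2"
  shows "snd (gr (Al s)) \<le> snd (gr (Al (s+1))) \<and> snd (gr (B n s)) \<le> snd (gr (Al (s+1)))
     \<and> snd (gr (At s)) \<le> snd (gr (Al (s+1))) \<and> snd (gr (B (n-1) s)) \<le> snd (gr (Al (s+1)))"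
  using R1[OF assms] R2[OF assms] PMi Pge by (elim conjE; linarith)

lemma up_step:
  assumes "n + 1 \<le> s" "s \<le> 2*n - 2"
  shows "fst (gr (Al (s+1))) \<le> fst (gr (Al s)) \<and> fst (gr (B n s)) \<le> fst (gr (Al s))
     \<and> fst (gr (At s)) \<le> fst (gr (Al s)) \<and> fst (gr (B (n+1) s)) \<le> fst (gr (Al s))"
  using R4[OF assms] R5[OF assms] PMi Pge by (elim conjE; linarith)

lemma low_base: "snd (gr (Al (n-1))) = snd (gr (Al n)) - 2 * int n"
   "snd (gr (B n (n-1))) \<le> snd (gr (Al n)) - 2 * int n"
proof -
  have a: "n - 1 \<le> n - 1" "n - 1 \<le> n" by auto
  have e: "n - 1 + 1 = n" "n*(n-1) div 2 + (n-1) + 1 - n = n*(n-1) div 2" using n3 by auto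
  note r = R3[OF a, unfolded e]
  have r1: "snd (gr (Al (n-1))) - 2*int (n*(n-1) div 2) = snd (gr (B n (n-1))) - 1"
    using r(1) by blast
  have r2: "snd (gr (Al n)) - 2*int (n*(n+1) div 2) = snd (gr (B n (n-1))) - 1"
    using r(2) by blast
  have L: "\<And>(a::int) (b::int) (c::int) (P::int) (M::int) (N::int). a - 2*M = c - 1 \<Longrightarrow> b - 2*P = c - 1 \<Longrightarrow> P = M + N \<Longrightarrow> N + 1 \<le> P
     \<Longrightarrow> a = b - 2*N \<and> c \<le> b - 2*N" by arith
  note q = L[OF r1 r2 PMi Pge]
  show "snd (gr (Al (n-1))) = snd (gr (Al n)) - 2 * int n" using q by blast
  show "snd (gr (B n (n-1))) \<le> snd (gr (Al n)) - 2 * int n" using q by blast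
qed

lemma up_base: "fst (gr (Al (n+1))) = fst (gr (Al n)) - 2 * int n"
   "fst (gr (B n n)) \<le> fst (gr (Al n)) - 2 * int n"
proof -
  have a: "n - 1 \<le> n" "n \<le> n" by auto
  have e: "int (n*(n+1) div 2 - n) = int (n*(n+1) div 2) - int n" using P_ge[OF n3] by simp
  note r = R3[OF a, unfolded e]
  have r1: "fst (gr (Al n)) - 2*int (n*(n+1) div 2) = fst (gr (B n n)) - 1"
    using r(1) by blast
  have r2: "fst (gr (Al (n+1))) - 2*(int (n*(n+1) div 2) - int n) = fst (gr (B n n)) - 1"
    using r(2) by blast
  have L: "\<And>(a::int) (b::int) (c::int) (P::int) (N::int). b - 2*P = c - 1 \<Longrightarrow> a - 2*(P - N) = c - 1 \<Longrightarrow> N + 1 \<le> P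
     \<Longrightarrow> a = b - 2*N \<and> c \<le> b - 2*N" by arith
  note q = L[OF r1 r2 Pge]
  show "fst (gr (Al (n+1))) = fst (gr (Al n)) - 2 * int n" using q by blast
  show "fst (gr (B n n)) \<le> fst (gr (Al n)) - 2 * int n" using q by blast
qed

lemma low_all_k: "k \<le> n - 2 \<Longrightarrow> snd (gr (Al (n-1-k))) \<le> snd (gr (Al n)) - 2 * int n"
proof (induction k)
  case 0
  have "snd (gr (Al (n-1))) = snd (gr (Al n)) - 2 * int n" by (rule low_base(1))
  then show ?case by simp
next
  case (Suc k)
  define s where "s = n - 1 - Suc k"
  have s1: "1 \<le> s" "s \<le> n - 2" using Suc.prems n3 unfolding s_def by auto
  have e: "s + 1 = n - 1 - k" using Suc.prems n3 unfolding s_def by auto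
  have kk: "k \<le> n - 2" using Suc.prems by linarith
  have ih: "snd (gr (Al (n-1-k))) \<le> snd (gr (Al n)) - 2 * int n" by (rule Suc.IH[OF kk])
  have "snd (gr (Al s)) \<le> snd (gr (Al (s+1)))" using low_step[OF s1] by blast
  then have "snd (gr (Al s)) \<le> snd (gr (Al (n-1-k)))" unfolding e .
  with ih have "snd (gr (Al s)) \<le> snd (gr (Al n)) - 2 * int n" by linarith
  then show ?case unfolding s_def .
qed

lemma low_all: "1 \<le> s \<Longrightarrow> s \<le> n - 1 \<Longrightarrow> snd (gr (Al s)) \<le> snd (gr (Al n)) - 2 * int n"
proof -
  assume a: "1 \<le> s" "s \<le> n - 1"
  have k: "n - 1 - s \<le> n - 2" using a by linarith
  have e: "n - 1 - (n - 1 - s) = s" using a by linarith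
  show ?thesis using low_all_k[OF k] unfolding e .
qed

lemma up_all_k: "n + 1 + k \<le> 2*n - 1 \<Longrightarrow> fst (gr (Al (n+1+k))) \<le> fst (gr (Al n)) - 2 * int n"
proof (induction k)
  case 0
  have "fst (gr (Al (n+1))) = fst (gr (Al n)) - 2 * int n" by (rule up_base(1))
  then show ?case by simp
next
  case (Suc k)
  define s where "s = n + 1 + k"
  have s1: "n + 1 \<le> s" "s \<le> 2*n - 2" using Suc.prems n3 unfolding s_def by auto
  have kk: "n + 1 + k \<le> 2*n - 1" using Suc.prems by linarith
  have ih: "fst (gr (Al s)) \<le> fst (gr (Al n)) - 2 * int n" unfolding s_def by (rule Suc.IH[OF kk])
  have "fst (gr (Al (s+1))) \<le> fst (gr (Al s))" using up_step[OF s1] by blast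
  with ih have "fst (gr (Al (s+1))) \<le> fst (gr (Al n)) - 2 * int n" by linarith
  moreover have "s + 1 = n + 1 + Suc k" unfolding s_def by simp
  ultimately show ?case by simp
qed

lemma up_all: "n + 1 \<le> s \<Longrightarrow> s \<le> 2*n - 1 \<Longrightarrow> fst (gr (Al s)) \<le> fst (gr (Al n)) - 2 * int n"
proof -
  assume a: "n + 1 \<le> s" "s \<le> 2*n - 1"
  have k: "n + 1 + (s - (n+1)) \<le> 2*n - 1" using a by linarith
  have e: "n + 1 + (s - (n+1)) = s" using a by linarith
  show ?thesis using up_all_k[OF k] unfolding e .
qed

lemma lowgen: "1 \<le> s \<Longrightarrow> s \<le> n - 2 \<Longrightarrow> g \<in> {B n s, At s, B (n-1) s} \<Longrightarrow>
   snd (gr g) \<le> snd (gr (Al n)) - 2 * int n"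
proof -
  assume a: "1 \<le> s" "s \<le> n - 2" "g \<in> {B n s, At s, B (n-1) s}"
  have "snd (gr g) \<le> snd (gr (Al (s+1)))" using low_step[OF a(1,2)] a(3) by blast
  moreover have "snd (gr (Al (s+1))) \<le> snd (gr (Al n)) - 2 * int n"
    using low_all[of "s+1"] a n3 by simp
  ultimately show ?thesis by linarith
qed

lemma upgen: "n + 1 \<le> s \<Longrightarrow> s \<le> 2*n - 2 \<Longrightarrow> g \<in> {B n s, At s, B (n+1) s} \<Longrightarrow>
   fst (gr g) \<le> fst (gr (Al n)) - 2 * int n"
proof -
  assume a: "n + 1 \<le> s" "s \<le> 2*n - 2" "g \<in> {B n s, At s, B (n+1) s}"
  have "fst (gr g) \<le> fst (gr (Al s))" using up_step[OF a(1,2)] a(3) by blast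
  moreover have "fst (gr (Al s)) \<le> fst (gr (Al n)) - 2 * int n"
    using up_all[of s] a n3 by simp
  ultimately show ?thesis by linarith
qed

lemma key:
  assumes "h \<in> basis n" "h \<noteq> Al n"
  shows "fst (gr h) \<le> fst (gr (Al n)) - 2 * int n \<or> snd (gr h) \<le> snd (gr (Al n)) - 2 * int n"
proof -
  consider (a) s where "h = Al s" "1 \<le> s" "s \<le> 2*n - 1"
    | (t) s where "h = At s" "(1 \<le> s \<and> s \<le> n - 2) \<or> (n + 1 \<le> s \<and> s \<le> 2*n - 2)"
    | (b1) s where "h = B (n-1) s" "1 \<le> s" "s \<le> n - 2"
    | (b2) s where "h = B n s" "1 \<le> s" "s \<le> 2*n - 2"
    | (b3) s where "h = B (n+1) s" "n + 1 \<le> s" "s \<le> 2*n - 2"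
    using assms(1) unfolding basis_def by blast
  then show ?thesis
  proof cases
    case a
    have "s \<noteq> n" using a assms(2) by blast
    then consider "s \<le> n - 1" | "n + 1 \<le> s" by linarith
    then show ?thesis
    proof cases
      case 1 then show ?thesis using a low_all[of s] by simp
    next
      case 2 then show ?thesis using a up_all[of s] by simp
    qed
  next
    case t
    from t(2) show ?thesis
    proof
      assume "1 \<le> s \<and> s \<le> n - 2"
      then show ?thesis using t(1) lowgen[of s h] by blast
    next
      assume "n + 1 \<le> s \<and> s \<le> 2*n - 2"
      then show ?thesis using t(1) upgen[of s h] by blast
    qed
  next
    case b1
    then show ?thesis using lowgen[of s h] by blast
  next
    case b2
    consider "s \<le> n - 2" | "s = n - 1" | "s = n" | "n + 1 \<le> s" by linarith
    then show ?thesis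
    proof cases
      case 1 then show ?thesis using b2 lowgen[of s h] by blast
    next
      case 2 then show ?thesis using b2 low_base by simp
    next
      case 3 then show ?thesis using b2 up_base by simp
    next
      case 4 then show ?thesis using b2 upgen[of s h] by blast
    qed
  next
    case b3
    then show ?thesis using upgen[of s h] by blast
  qed
qed

end

theorem lemma2p9:
  fixes n :: nat and gr :: "gen \<Rightarrow> int \<times> int" and \<phi> :: "elt \<Rightarrow> elt" and c1 c2 :: int
  assumes "n \<ge> 3"
    and "admissible_grading n gr"
    and "R_linear n \<phi>"
    and "chain_map n \<phi>"
    and "homogeneous_map gr n (c1, c2) \<phi>"
    and "c1 > - 2 * int n" and "c2 > - 2 * int n"
  shows "\<phi> (bvec (Al n)) = (\<lambda>_. 0) \<or> (\<exists>c :: ring. \<phi> (bvec (Al n)) = scal c (bvec (Al n)))"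
proof -
  define x where "x = bvec (Al n)"
  define y where "y = \<phi> x"
  have bn: "Al n \<in> basis n" using assms(1) unfolding basis_def by auto
  have xc: "x \<in> carrier n" using bn unfolding x_def carrier_def bvec_def by auto
  have yc: "y \<in> carrier n" using assms(3) xc unfolding R_linear_def y_def by blast
  have hx: "homog gr (gr (Al n)) x"
    unfolding homog_def x_def bvec_def by (auto simp: coeff_1 split: if_splits)
  have hy: "homog gr (fst (gr (Al n)) + c1, snd (gr (Al n)) + c2) y"
    using assms(5) xc hx unfolding homogeneous_map_def y_def by fastforce
  have "y = scal (y (Al n)) x"
  proof
    fix h
    show "y h = scal (y (Al n)) x h"
    proof (cases "h = Al n")
      case True then show ?thesis by (simp add: scal_def x_def bvec_def)
    next
      case False
      have "y h = 0"
      proof (cases "h \<in> basis n")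
        case False then show ?thesis using yc unfolding carrier_def by blast
      next
        case hb: True
        show ?thesis
        proof (rule ccontr)
          assume "y h \<noteq> 0"
          then have c1: "coeff (y h) (degree (y h)) \<noteq> 0" by simp
          then have "coeff (coeff (y h) (degree (y h))) (degree (coeff (y h) (degree (y h)))) \<noteq> 0"
            by simp
          from hy[unfolded homog_def, rule_format, OF this]
          have "fst (gr h) \<ge> fst (gr (Al n)) + c1" "snd (gr h) \<ge> snd (gr (Al n)) + c2" by auto
          then show False using key[OF assms(1,2) hb False] assms(6,7) by linarith
        qed
      qed
      then show ?thesis using False by (simp add: scal_def x_def bvec_def)
    qed
  qed
  then show ?thesis unfolding y_def x_def by blast
qed

end
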